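(* Let $n\ge2$. The metric $g_{ij}(p)=\left(\frac{1}{n-1}-\delta_{ij}\right)p_ip_j$ on $\{p\in\mathbb{C}^n: p_i\neq0\ \forall i\}$ is flat. *)

theory Defs
  imports "HOL-Analysis.Analysis"
begin

text \<open>Points of C^n are functions p :: nat => complex, only coordinates i < n matter.\<close>

definition pd :: "nat \<Rightarrow> ((nat \<Rightarrow> complex) \<Rightarrow> complex) \<Rightarrow> (nat \<Rightarrow> complex) \<Rightarrow> complex" where
  "pd i f p = deriv (\<lambda>t. f (p(i := t))) (p i)"

definition is_inv_mat :: "nat \<Rightarrow> (nat \<Rightarrow> nat \<Rightarrow> complex) \<Rightarrow> (nat \<Rightarrow> nat \<Rightarrow> complex) \<Rightarrow> bool" where
  "is_inv_mat n A B \<longleftrightarrow>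
     (\<forall>i<n. \<forall>j<n. (\<Sum>k<n. A i k * B k j) = (if i = j then 1 else 0)) \<and>
     (\<forall>i<n. \<forall>j<n. (\<Sum>k<n. B i k * A k j) = (if i = j then 1 else 0)) \<and>
     (\<forall>i j. (n \<le> i \<or> n \<le> j) \<longrightarrow> B i j = 0)"

definition nondegenerate :: "nat \<Rightarrow> (nat \<Rightarrow> nat \<Rightarrow> complex) \<Rightarrow> bool" where
  "nondegenerate n A \<longleftrightarrow> (\<exists>B. is_inv_mat n A B)"

definition inv_metric :: "nat \<Rightarrow> (nat \<Rightarrow> nat \<Rightarrow> (nat \<Rightarrow> complex) \<Rightarrow> complex)
    \<Rightarrow> nat \<Rightarrow> nat \<Rightarrow> (nat \<Rightarrow> complex) \<Rightarrow> complex" where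
  "inv_metric n g k l p = (THE B. is_inv_mat n (\<lambda>i j. g i j p) B) k l"

definition christoffel :: "nat \<Rightarrow> (nat \<Rightarrow> nat \<Rightarrow> (nat \<Rightarrow> complex) \<Rightarrow> complex)
    \<Rightarrow> nat \<Rightarrow> nat \<Rightarrow> nat \<Rightarrow> (nat \<Rightarrow> complex) \<Rightarrow> complex" where
  "christoffel n g k i j p =
     (\<Sum>l<n. inv_metric n g k l p *
        (pd i (g j l) p + pd j (g i l) p - pd l (g i j) p)) / 2"

definition riemann :: "nat \<Rightarrow> (nat \<Rightarrow> nat \<Rightarrow> (nat \<Rightarrow> complex) \<Rightarrow> complex)
    \<Rightarrow> nat \<Rightarrow> nat \<Rightarrow> nat \<Rightarrow> nat \<Rightarrow> (nat \<Rightarrow> complex) \<Rightarrow> complex" where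
  "riemann n g l i j k p =
     pd i (christoffel n g l j k) p - pd j (christoffel n g l i k) p
     + (\<Sum>m<n. christoffel n g l i m p * christoffel n g m j k p
               - christoffel n g l j m p * christoffel n g m i k p)"

definition flat_metric :: "nat \<Rightarrow> (nat \<Rightarrow> nat \<Rightarrow> (nat \<Rightarrow> complex) \<Rightarrow> complex)
    \<Rightarrow> (nat \<Rightarrow> complex) set \<Rightarrow> bool" where
  "flat_metric n g U \<longleftrightarrow>
     (\<forall>p\<in>U. nondegenerate n (\<lambda>i j. g i j p)) \<and>
     (\<forall>p\<in>U. \<forall>l<n. \<forall>i<n. \<forall>j<n. \<forall>k<n. riemann n g l i j k p = 0)"

end

theory Submission
  imports Defs
begin

definition cc :: "nat \<Rightarrow> complex" where "cc n = 1 / (of_nat n - 1)"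

lemma cc_prop: "n \<ge> 2 \<Longrightarrow> cc n * (of_nat n - 1) = 1"
proof -
  assume "n \<ge> 2"
  hence "(of_nat n :: complex) - 1 \<noteq> 0"
    by (metis of_nat_1 of_nat_eq_iff right_minus_eq not_numeral_le_zero numeral_le_one_iff semiring_norm(69) Suc_1 Suc_n_not_le_n)
  thus ?thesis unfolding cc_def by simp
qed

lemma sum_key:
  fixes c :: complex
  assumes "k < n" "i < n"
  shows "(\<Sum>l<n. (1 - (if k = l then 1 else 0)) * (c - (if i = l then 1 else 0)))
      = of_nat n * c - c - 1 + (if i = k then 1 else 0)"
proof -
  have "(\<Sum>l<n. (1 - (if k = l then 1 else 0)) * (c - (if i = l then 1 else 0)))
     = (\<Sum>l<n. c - (if k = l then c else 0) - (if i = l then 1 else 0) + (if k = l then (if i = k then 1 else 0) else 0))"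
    by (rule sum.cong) auto
  also have "\<dots> = of_nat n * c - c - 1 + (if i = k then 1 else 0)"
    using assms by (simp add: sum.distrib sum_subtractf)
  finally show ?thesis .
qed

lemma inv_unique:
  assumes "is_inv_mat n A B" "is_inv_mat n A B'"
  shows "B = B'"
proof (intro ext)
  fix i j
  show "B i j = B' i j"
  proof (cases "i < n \<and> j < n")
    case True
    have "(\<Sum>k<n. (if i = k then 1 else 0) * B' k j) = (\<Sum>k<n. if i = k then B' k j else 0)"
      by (rule sum.cong) auto
    hence "B' i j = (\<Sum>k<n. (if i = k then 1 else 0) * B' k j)" using True by simp
    also have "\<dots> = (\<Sum>k<n. (\<Sum>m<n. B i m * A m k) * B' k j)"
      using assms(1) True unfolding is_inv_mat_def by (intro sum.cong) auto
    also have "\<dots> = (\<Sum>m<n. B i m * (\<Sum>k<n. A m k * B' k j))"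
      by (simp add: sum_distrib_left sum_distrib_right mult.assoc) (rule sum.swap)
    also have "\<dots> = (\<Sum>m<n. B i m * (if m = j then 1 else 0))"
      using assms(2) True unfolding is_inv_mat_def by (intro sum.cong) auto
    also have "\<dots> = (\<Sum>m<n. if m = j then B i m else 0)"
      by (rule sum.cong) auto
    also have "\<dots> = B i j" using True by simp
    finally show ?thesis by simp
  next
    case False
    thus ?thesis using assms unfolding is_inv_mat_def by auto
  qed
qed

definition G :: "nat \<Rightarrow> nat \<Rightarrow> nat \<Rightarrow> (nat \<Rightarrow> complex) \<Rightarrow> complex" where
  "G n i j p = (1 / (of_nat n - 1) - (if i = j then 1 else 0)) * p i * p j"

definition Binv :: "nat \<Rightarrow> (nat \<Rightarrow> complex) \<Rightarrow> nat \<Rightarrow> nat \<Rightarrow> complex" where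
  "Binv n p k l = (if k < n \<and> l < n then (if k = l then 0 else 1 / (p k * p l)) else 0)"

lemma G_cc: "G n i j p = (cc n - (if i = j then 1 else 0)) * p i * p j"
  unfolding G_def cc_def by simp

lemma Binv_inv:
  assumes n: "n \<ge> 2" and p: "\<forall>i<n. p i \<noteq> 0"
  shows "is_inv_mat n (\<lambda>i j. G n i j p) (Binv n p)"
proof -
  have c: "of_nat n * cc n - cc n - 1 = 0" using cc_prop[OF n] by (simp add: algebra_simps)
  have 1: "(\<Sum>k<n. G n i k p * Binv n p k j) = (if i = j then 1 else 0)" if "i < n" "j < n" for i j
  proof -
    have "(\<Sum>k<n. G n i k p * Binv n p k j)
       = (\<Sum>k<n. (p i / p j) * ((1 - (if j = k then 1 else 0)) * (cc n - (if i = k then 1 else 0))))"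
      using that p by (intro sum.cong) (auto simp: G_cc Binv_def field_simps)
    also have "\<dots> = (p i / p j) * (of_nat n * cc n - cc n - 1 + (if i = j then 1 else 0))"
      by (simp only: sum_distrib_left[symmetric] sum_key[OF that(2,1)])
    also have "\<dots> = (if i = j then 1 else 0)" using c p that by auto
    finally show ?thesis .
  qed
  have 2: "(\<Sum>k<n. Binv n p i k * G n k j p) = (if i = j then 1 else 0)" if "i < n" "j < n" for i j
  proof -
    have "(\<Sum>k<n. Binv n p i k * G n k j p)
       = (\<Sum>k<n. (p j / p i) * ((1 - (if i = k then 1 else 0)) * (cc n - (if j = k then 1 else 0))))"
      using that p by (intro sum.cong) (auto simp: G_cc Binv_def field_simps)
    also have "\<dots> = (p j / p i) * (of_nat n * cc n - cc n - 1 + (if j = i then 1 else 0))"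
      by (simp only: sum_distrib_left[symmetric] sum_key[OF that(1,2)])
    also have "\<dots> = (if i = j then 1 else 0)" using c p that by auto
    finally show ?thesis .
  qed
  show ?thesis unfolding is_inv_mat_def using 1 2 by (auto simp: Binv_def)
qed

lemma inv_metric_G:
  assumes n: "n \<ge> 2" and p: "\<forall>i<n. p i \<noteq> 0"
  shows "inv_metric n (G n) k l p = Binv n p k l"
proof -
  have "(THE B. is_inv_mat n (\<lambda>i j. G n i j p) B) = Binv n p"
    using Binv_inv[OF n p] inv_unique by blast
  thus ?thesis unfolding inv_metric_def by simp
qed

lemma coord_deriv: "((\<lambda>t. (p(i := t)) j) has_field_derivative (if i = j then 1 else 0)) (at x)"
  by (cases "i = j") (auto intro: derivative_eq_intros)

lemma pd_G: "pd i (G n j l) p = (cc n - (if j = l then 1 else 0)) *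
   ((if i = j then 1 else 0) * p l + p j * (if i = l then 1 else 0))"
proof -
  note D = DERIV_imp_deriv[OF DERIV_mult[OF DERIV_cmult[OF coord_deriv[of p i j]] coord_deriv[of p i l]], of "cc n - (if j = l then 1 else 0)" "p i"]
  show ?thesis unfolding pd_def G_cc D by (simp add: algebra_simps)
qed

lemma christoffel_G:
  assumes n: "n \<ge> 2" and p: "\<forall>i<n. p i \<noteq> 0" and k: "k < n" and i: "i < n" and j: "j < n"
  shows "christoffel n (G n) k i j p = (if i = j \<and> j = k then 1 / p k else 0)"
proof -
  have st: "pd i (G n j l) p + pd j (G n i l) p - pd l (G n i j) p
      = (if i = j then 2 * (cc n - (if i = l then 1 else 0)) * p l else 0)" for l
    unfolding pd_G by (auto simp: algebra_simps)
  have "christoffel n (G n) k i j p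
     = (\<Sum>l<n. Binv n p k l * (if i = j then 2 * (cc n - (if i = l then 1 else 0)) * p l else 0)) / 2"
    unfolding christoffel_def inv_metric_G[OF n p] st ..
  also have "\<dots> = (if i = j then (1 / p k) * (\<Sum>l<n. (1 - (if k = l then 1 else 0)) * (cc n - (if i = l then 1 else 0))) else 0)"
  proof (cases "i = j")
    case True
    have "(\<Sum>l<n. Binv n p k l * (2 * (cc n - (if i = l then 1 else 0)) * p l)) / 2
       = (\<Sum>l<n. (1 / p k) * ((1 - (if k = l then 1 else 0)) * (cc n - (if i = l then 1 else 0))))"
      unfolding sum_divide_distrib using p k by (intro sum.cong) (auto simp: Binv_def field_simps)
    thus ?thesis using True by (simp only: sum_distrib_left[symmetric]) simp
  qed simp
  also have "\<dots> = (if i = j \<and> j = k then 1 / p k else 0)"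
  proof -
    have c: "of_nat n * cc n - cc n - 1 = 0" using cc_prop[OF n] by (simp add: algebra_simps)
    show ?thesis by (simp only: sum_key[OF k i] c) (use p k in auto)
  qed
  finally show ?thesis .
qed

lemma pd_chr:
  assumes n: "n \<ge> 2" and p: "\<forall>i<n. p i \<noteq> 0" and l: "l < n" and i: "i < n" and j: "j < n" and k: "k < n"
  shows "pd i (christoffel n (G n) l j k) p = (if i = j \<and> j = k \<and> k = l then - 1 / (p l)^2 else 0)"
proof -
  define h where "h t = (if j = k \<and> k = l then 1 / (p(i := t)) l else 0)" for t
  have eq: "christoffel n (G n) l j k (p(i := t)) = h t" if "t \<in> {t. t \<noteq> 0}" for t
    unfolding h_def by (rule christoffel_G[OF n _ l j k]) (use p that in auto)
  have hd: "(h has_field_derivative (if i = j \<and> j = k \<and> k = l then - 1 / (p l)^2 else 0)) (at (p i))"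
  proof (cases "j = k \<and> k = l")
    case True
    show ?thesis
    proof (cases "i = l")
      case True2: True
      have "h = (\<lambda>t. 1 / t)" using True True2 by (auto simp: h_def)
      moreover have "((\<lambda>t. 1 / t) has_field_derivative - 1 / (p l)^2) (at (p i))"
        using True2 p l by (auto intro!: derivative_eq_intros simp: power2_eq_square field_simps)
      ultimately show ?thesis using True True2 by simp
    next
      case False
      have "h = (\<lambda>t. 1 / p l)" using True False by (auto simp: h_def)
      thus ?thesis using False True by simp
    qed
  next
    case False
    have "h = (\<lambda>t. 0)" using False by (auto simp: h_def)
    thus ?thesis using False by auto
  qed
  have "((\<lambda>t. christoffel n (G n) l j k (p(i := t))) has_field_derivative
        (if i = j \<and> j = k \<and> k = l then - 1 / (p l)^2 else 0)) (at (p i))"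
    by (rule has_field_derivative_transform_within_open[OF hd, of "{t. t \<noteq> 0}"])
       (use p i eq in \<open>auto simp: open_Collect_neq\<close>)
  thus ?thesis unfolding pd_def by (rule DERIV_imp_deriv)
qed

lemma riemann_G:
  assumes n: "n \<ge> 2" and p: "\<forall>i<n. p i \<noteq> 0" and l: "l < n" and i: "i < n" and j: "j < n" and k: "k < n"
  shows "riemann n (G n) l i j k p = 0"
proof -
  have s: "(\<Sum>m<n. christoffel n (G n) l i m p * christoffel n (G n) m j k p
               - christoffel n (G n) l j m p * christoffel n (G n) m i k p) = 0"
    by (rule sum.neutral) (use n p l i j k in \<open>auto simp: christoffel_G\<close>)
  show ?thesis unfolding riemann_def s using pd_chr[OF n p l i j k] pd_chr[OF n p l j i k] by auto
qed

theorem mainTheorem7: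
  fixes n :: nat
  assumes "n \<ge> 2"
  shows "flat_metric n
           (\<lambda>i j p. (1 / (of_nat n - 1) - (if i = j then 1 else 0)) * p i * p j)
           {p. \<forall>i<n. p i \<noteq> 0}"
proof -
  have eq: "(\<lambda>i j p. (1 / (of_nat n - 1) - (if i = j then 1 else 0)) * p i * p j) = G n"
    by (simp add: fun_eq_iff G_def)
  show ?thesis unfolding eq flat_metric_def nondegenerate_def
    using Binv_inv[OF assms] riemann_G[OF assms] by blast
qed

end
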